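(* Let $k$ be a positive integer. If a graph $G$ is $k$-maximal, then $\kappa'(G)=\overline{\kappa'}(G)=k$.
   Context: Graphs are finite, loopless, possibly with multiple edges. $\kappa'(G)$ is the edge connectivity and $\overline{\kappa'}(G)=\max\{\kappa'(H): H \text{ a subgraph of } G\}$. A graph $G$ is $k$-maximal if $\overline{\kappa'}(G)\le k$ but for any new edge $e\notin E(G)$ joining two vertices of $G$ (possibly parallel to an existing edge), $\overline{\kappa'}(G+e)\ge k+1$. *)

theory Defs
  imports Main
begin

text \<open>A finite loopless multigraph: vertex set V and a symmetric edge-multiplicity
  function m (m u v = number of parallel edges between u and v).\<close>

definition mgraph :: "'a set \<Rightarrow> ('a \<Rightarrow> 'a \<Rightarrow> nat) \<Rightarrow> bool" where
  "mgraph V m \<longleftrightarrow> finite V \<and> (\<forall>u v. m u v = m v u) \<and> (\<forall>v. m v v = 0)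
     \<and> (\<forall>u v. 0 < m u v \<longrightarrow> u \<in> V \<and> v \<in> V)"

definition subgraph :: "'a set \<Rightarrow> ('a \<Rightarrow> 'a \<Rightarrow> nat) \<Rightarrow> 'a set \<Rightarrow> ('a \<Rightarrow> 'a \<Rightarrow> nat) \<Rightarrow> bool" where
  "subgraph W h V m \<longleftrightarrow> mgraph W h \<and> W \<subseteq> V \<and> (\<forall>u v. h u v \<le> m u v)"

definition cut_size :: "'a set \<Rightarrow> ('a \<Rightarrow> 'a \<Rightarrow> nat) \<Rightarrow> 'a set \<Rightarrow> nat" where
  "cut_size V m S = (\<Sum>u\<in>S. \<Sum>v\<in>V - S. m u v)"

definition edge_conn :: "'a set \<Rightarrow> ('a \<Rightarrow> 'a \<Rightarrow> nat) \<Rightarrow> nat" where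
  "edge_conn V m = (if card V \<le> 1 then 0
     else Min {cut_size V m S | S. S \<subseteq> V \<and> S \<noteq> {} \<and> S \<noteq> V})"

definition max_sub_edge_conn :: "'a set \<Rightarrow> ('a \<Rightarrow> 'a \<Rightarrow> nat) \<Rightarrow> nat" where
  "max_sub_edge_conn V m = Max {edge_conn W h | W h. subgraph W h V m}"

definition add_edge :: "('a \<Rightarrow> 'a \<Rightarrow> nat) \<Rightarrow> 'a \<Rightarrow> 'a \<Rightarrow> ('a \<Rightarrow> 'a \<Rightarrow> nat)" where
  "add_edge m u v = (\<lambda>x y. if (x = u \<and> y = v) \<or> (x = v \<and> y = u) then Suc (m x y) else m x y)"

definition k_maximal :: "nat \<Rightarrow> 'a set \<Rightarrow> ('a \<Rightarrow> 'a \<Rightarrow> nat) \<Rightarrow> bool" where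
  "k_maximal k V m \<longleftrightarrow> max_sub_edge_conn V m \<le> k \<and>
     (\<forall>u\<in>V. \<forall>v\<in>V. u \<noteq> v \<longrightarrow> max_sub_edge_conn V (add_edge m u v) \<ge> k + 1)"

end

theory Submission
  imports Defs
begin

lemma cutset_finite:
  assumes "finite W"
  shows "finite {cut_size W h S | S. S \<subseteq> W \<and> S \<noteq> {} \<and> S \<noteq> W}"
proof -
  have "{cut_size W h S | S. S \<subseteq> W \<and> S \<noteq> {} \<and> S \<noteq> W} \<subseteq> cut_size W h ` Pow W" by auto
  thus ?thesis using assms finite_subset by blast
qed

lemma edge_conn_bound:
  assumes "mgraph V m" "subgraph W h V m"
  shows "edge_conn W h \<le> (\<Sum>u\<in>V. \<Sum>v\<in>V. m u v)"
proof (cases "card W \<le> 1")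
  case True thus ?thesis by (simp add: edge_conn_def)
next
  case False
  have fW: "finite W" and WV: "W \<subseteq> V" and hm: "\<And>u v. h u v \<le> m u v"
    using assms(2) unfolding subgraph_def mgraph_def by auto
  have fV: "finite V" using assms(1) unfolding mgraph_def by auto
  from False have "W \<noteq> {}" by auto
  then obtain x where x: "x \<in> W" by auto
  have ne: "{x} \<noteq> W" using False by auto
  have "edge_conn W h = Min {cut_size W h S | S. S \<subseteq> W \<and> S \<noteq> {} \<and> S \<noteq> W}"
    using False by (simp add: edge_conn_def)
  also have "\<dots> \<le> cut_size W h {x}"
    by (rule Min_le[OF cutset_finite[OF fW]]) (use x ne in auto)
  also have "\<dots> = (\<Sum>v\<in>W-{x}. h x v)" by (simp add: cut_size_def)
  also have "\<dots> \<le> (\<Sum>v\<in>W-{x}. m x v)" by (rule sum_mono) (rule hm)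
  also have "\<dots> \<le> (\<Sum>v\<in>V. m x v)" by (rule sum_mono2[OF fV]) (use WV in auto)
  also have "\<dots> \<le> (\<Sum>u\<in>V. \<Sum>v\<in>V. m u v)"
    by (rule member_le_sum) (use x WV fV in auto)
  finally show ?thesis .
qed

lemma subset_finite_ne:
  assumes "mgraph V m"
  shows "finite {edge_conn W h | W h. subgraph W h V m}"
    "{edge_conn W h | W h. subgraph W h V m} \<noteq> {}"
proof -
  show "finite {edge_conn W h | W h. subgraph W h V m}"
    by (rule finite_subset[of _ "{..(\<Sum>u\<in>V. \<Sum>v\<in>V. m u v)}"])
       (use edge_conn_bound[OF assms] in auto)
  have "subgraph {} (\<lambda>_ _. 0) V m" by (simp add: subgraph_def mgraph_def)
  thus "{edge_conn W h | W h. subgraph W h V m} \<noteq> {}" by blast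
qed

lemma add_edge_mgraph:
  assumes "mgraph V m" "u \<in> V" "v \<in> V" "u \<noteq> v"
  shows "mgraph V (add_edge m u v)"
  using assms unfolding mgraph_def add_edge_def by auto

theorem lemma3p3:
  fixes k :: nat and V :: "'a set" and m :: "'a \<Rightarrow> 'a \<Rightarrow> nat"
  assumes "0 < k"
    and "mgraph V m"
    and "2 \<le> card V"
    and "k_maximal k V m"
  shows "edge_conn V m = k \<and> max_sub_edge_conn V m = k"
proof -
  have fV: "finite V" using assms(2) unfolding mgraph_def by auto
  have self: "subgraph V m V m" using assms(2) by (simp add: subgraph_def)
  have le: "edge_conn V m \<le> max_sub_edge_conn V m"
    unfolding max_sub_edge_conn_def
    by (rule Max_ge[OF subset_finite_ne(1)[OF assms(2)]]) (use self in blast)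
  have mk: "max_sub_edge_conn V m \<le> k" using assms(4) by (simp add: k_maximal_def)
  have ge: "edge_conn V m \<ge> k"
  proof (rule ccontr)
    assume lt: "\<not> k \<le> edge_conn V m"
    have ec: "edge_conn V m = Min {cut_size V m S | S. S \<subseteq> V \<and> S \<noteq> {} \<and> S \<noteq> V}"
      using assms(3) by (simp add: edge_conn_def)
    have ne: "{cut_size V m S | S. S \<subseteq> V \<and> S \<noteq> {} \<and> S \<noteq> V} \<noteq> {}"
    proof -
      obtain x where x: "x \<in> V" using assms(3) by fastforce
      have "{x} \<noteq> V" using assms(3) by auto
      thus ?thesis using x by blast
    qed
    have "edge_conn V m \<in> {cut_size V m S | S. S \<subseteq> V \<and> S \<noteq> {} \<and> S \<noteq> V}"
      unfolding ec by (rule Min_in[OF cutset_finite[OF fV] ne])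
    then obtain S where S: "S \<subseteq> V" "S \<noteq> {}" "S \<noteq> V" and eS: "edge_conn V m = cut_size V m S"
      by blast
    have cS: "cut_size V m S < k" using lt eS by simp
    obtain u where u: "u \<in> S" using S by auto
    obtain v where v: "v \<in> V" "v \<notin> S" using S by auto
    have uv: "u \<noteq> v" using u v by auto
    define m' where "m' = add_edge m u v"
    have mg': "mgraph V m'" unfolding m'_def
      by (rule add_edge_mgraph[OF assms(2)]) (use u v S uv in auto)
    have "max_sub_edge_conn V m' \<ge> k + 1"
      using assms(4) u v S uv unfolding k_maximal_def m'_def by blast
    moreover have "max_sub_edge_conn V m' \<in> {edge_conn W h | W h. subgraph W h V m'}"
      unfolding max_sub_edge_conn_def
      by (rule Max_in[OF subset_finite_ne[OF mg']])
    ultimately obtain W h where H: "subgraph W h V m'" and eH: "edge_conn W h \<ge> k + 1"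
      by auto
    have fW: "finite W" and WV: "W \<subseteq> V" and hm: "\<And>x y. h x y \<le> m' x y"
      and hW: "\<And>x y. 0 < h x y \<Longrightarrow> x \<in> W \<and> y \<in> W"
      using H unfolding subgraph_def mgraph_def by auto
    have cW: "\<not> card W \<le> 1" using eH by (auto simp: edge_conn_def)
    have cut_pos: "cut_size W h (S \<inter> W) \<le> cut_size V m' S"
    proof -
      have "cut_size W h (S \<inter> W) = (\<Sum>x\<in>S \<inter> W. \<Sum>y\<in>W - (S \<inter> W). h x y)"
        by (simp add: cut_size_def)
      also have "\<dots> \<le> (\<Sum>x\<in>S \<inter> W. \<Sum>y\<in>V - S. h x y)"
        by (rule sum_mono, rule sum_mono2) (use fV WV in auto)
      also have "\<dots> \<le> (\<Sum>x\<in>S. \<Sum>y\<in>V - S. h x y)"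
        by (rule sum_mono2) (use fV S in \<open>auto intro: finite_subset\<close>)
      also have "\<dots> \<le> (\<Sum>x\<in>S. \<Sum>y\<in>V - S. m' x y)"
        by (intro sum_mono hm)
      finally show ?thesis by (simp add: cut_size_def)
    qed
    have cut': "cut_size V m' S \<le> cut_size V m S + 1"
    proof -
      have "cut_size V m' S = (\<Sum>x\<in>S. \<Sum>y\<in>V - S. m x y + (if x = u \<and> y = v then 1 else 0))"
      proof -
        have pt: "\<And>x y. x \<in> S \<Longrightarrow> y \<in> V - S \<Longrightarrow>
            m' x y = m x y + (if x = u \<and> y = v then 1 else 0)"
        proof -
          fix x y assume xS: "x \<in> S" and yS: "y \<in> V - S"
          have nvu: "\<not> (x = v \<and> y = u)" using xS v by blast
          show "m' x y = m x y + (if x = u \<and> y = v then 1 else 0)"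
          proof (cases "x = u \<and> y = v")
            case True
            thus ?thesis unfolding m'_def add_edge_def by simp
          next
            case False
            have c: "\<not> ((x = u \<and> y = v) \<or> (x = v \<and> y = u))" using False nvu by blast
            show ?thesis unfolding m'_def add_edge_def if_not_P[OF c] if_not_P[OF False] by simp
          qed
        qed
        show ?thesis unfolding cut_size_def
          by (intro sum.cong refl) (simp add: pt)
      qed
      also have "\<dots> = cut_size V m S + (\<Sum>x\<in>S. \<Sum>y\<in>V - S. (if x = u \<and> y = v then 1 else 0))"
        by (simp only: cut_size_def sum.distrib)
      finally have eq: "cut_size V m' S = cut_size V m S + (\<Sum>x\<in>S. \<Sum>y\<in>V - S. (if x = u \<and> y = v then 1 else 0))" .
      have one: "(\<Sum>x\<in>S. \<Sum>y\<in>V - S. (if x = u \<and> y = v then 1 else 0)) = (1::nat)"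
      proof -
        have fS: "finite S" using fV S finite_subset by blast
        have "(\<Sum>x\<in>S. \<Sum>y\<in>V - S. (if x = u \<and> y = v then 1 else 0::nat))
              = (\<Sum>x\<in>S. if x = u then 1 else 0)"
        proof (rule sum.cong[OF refl])
          fix x assume "x \<in> S"
          show "(\<Sum>y\<in>V - S. (if x = u \<and> y = v then 1 else 0::nat)) = (if x = u then 1 else 0)"
          proof (cases "x = u")
            case True
            have "(\<Sum>y\<in>V - S. (if x = u \<and> y = v then 1 else 0::nat))
                 = (\<Sum>y\<in>V - S. (if y = v then 1 else 0::nat))"
              using True by simp
            also have "\<dots> = 1" using fV v by (simp add: sum.delta')
            finally show ?thesis using True by simp
          qed simp
        qed
        also have "\<dots> = 1" using fS u by simp
        finally show ?thesis .
      qed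
      show ?thesis using eq one by simp
    qed
    have hsym: "\<And>x y. h x y = h y x" using H unfolding subgraph_def mgraph_def by auto
    show False
    proof (cases "h u v = 0")
      case True
      have "\<And>x y. h x y \<le> m x y"
      proof -
        fix x y
        show "h x y \<le> m x y"
        proof (cases "(x = u \<and> y = v) \<or> (x = v \<and> y = u)")
          case True
          then have "h x y = 0"
          proof
            assume "x = u \<and> y = v" thus ?thesis using \<open>h u v = 0\<close> by (elim conjE) simp
          next
            assume "x = v \<and> y = u" thus ?thesis using \<open>h u v = 0\<close> hsym[of v u] by (elim conjE) simp
          qed
          thus ?thesis by simp
        next
          case False
          have "m' x y = m x y" unfolding m'_def add_edge_def if_not_P[OF False] ..
          thus ?thesis using hm[of x y] by simp
        qed
      qed
      hence "subgraph W h V m" using H by (simp add: subgraph_def)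
      hence "edge_conn W h \<le> max_sub_edge_conn V m"
        unfolding max_sub_edge_conn_def
        by (intro Max_ge[OF subset_finite_ne(1)[OF assms(2)]]) blast
      thus False using eH mk by simp
    next
      case False
      then have uW: "u \<in> W" and vW: "v \<in> W" using hW[of u v] by auto
      have "edge_conn W h = Min {cut_size W h T | T. T \<subseteq> W \<and> T \<noteq> {} \<and> T \<noteq> W}"
        using cW by (simp add: edge_conn_def)
      also have "\<dots> \<le> cut_size W h (S \<inter> W)"
        by (rule Min_le[OF cutset_finite[OF fW]]) (use uW vW u v in blast)
      finally show False using cut_pos cut' cS eH by linarith
    qed
  qed
  show ?thesis using le mk ge by simp
qed

end
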